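(* Let $w \in \mathfrak{S}_n$ and $i \in \textsf{supp}(w)$. If $i$ is unconfined in some reduced word $s$ of $w$, then the letter $i$ appears exactly once in every reduced word of $w$, and $i$ is unconfined in every reduced word of $w$.
   Context: $\sigma_i$ ($1\le i\le n-1$) is the simple transposition swapping $i$ and $i+1$; products are compositions of maps. A reduced word of $w$ is a word $i_1\cdots i_\ell$ of minimal length with $w=\sigma_{i_1}\cdots\sigma_{i_\ell}$; $R(w)$ is the set of reduced words. $\textsf{supp}(w)$ is the set of letters appearing in (any) reduced word of $w$. Given a reduced word $s$ of $w$ in which the letter $i$ appears exactly once, $i$ is called unconfined in $s$ if that occurrence of $i$ does not lie between two occurrences of $i+1$ in $s$ and does not lie between two occurrences of $i-1$ in $s$. *)

theory Defs
  imports "HOL-Combinatorics.Transposition" "HOL-Combinatorics.Permutations"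
begin

text \<open>The symmetric group S_n is modelled as the permutations of {1..n} (functions nat => nat
  that permute {1..n}). The simple transposition sigma_i swaps i and i+1.\<close>

definition sigma :: "nat \<Rightarrow> nat \<Rightarrow> nat" where
  "sigma i = transpose i (Suc i)"

definition word_perm :: "nat list \<Rightarrow> (nat \<Rightarrow> nat)" where
  "word_perm s = foldr (\<lambda>i f. sigma i \<circ> f) s id"

definition is_word :: "nat \<Rightarrow> nat list \<Rightarrow> bool" where
  "is_word n s \<longleftrightarrow> set s \<subseteq> {1..<n}"

definition reduced_word :: "nat \<Rightarrow> (nat \<Rightarrow> nat) \<Rightarrow> nat list \<Rightarrow> bool" where
  "reduced_word n w s \<longleftrightarrow> is_word n s \<and> word_perm s = w \<and>
     (\<forall>t. is_word n t \<and> word_perm t = w \<longrightarrow> length s \<le> length t)"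

definition R :: "nat \<Rightarrow> (nat \<Rightarrow> nat) \<Rightarrow> nat list set" where
  "R n w = {s. reduced_word n w s}"

definition supp :: "nat \<Rightarrow> (nat \<Rightarrow> nat) \<Rightarrow> nat set" where
  "supp n w = (\<Union>s\<in>R n w. set s)"

definition between :: "nat list \<Rightarrow> nat \<Rightarrow> nat \<Rightarrow> bool" where
  "between s i j \<longleftrightarrow> (\<exists>a p b. a < p \<and> p < b \<and> b < length s \<and>
       s ! p = i \<and> s ! a = j \<and> s ! b = j)"

text \<open>Unconfined: i appears exactly once, and that occurrence is not between two
  occurrences of i+1 nor between two occurrences of i-1.  (For i = 1, i - 1 = 0 is not
  a letter, so that condition is vacuous.)\<close>

definition unconfined :: "nat list \<Rightarrow> nat \<Rightarrow> bool" where
  "unconfined s i \<longleftrightarrow> count_list s i = 1 \<and>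
     \<not> between s i (Suc i) \<and> \<not> (i \<ge> 2 \<and> between s i (i - 1))"

end

theory Submission
  imports Defs
begin


lemma sigma_apply: "sigma j x = (if x = j then Suc j else if x = Suc j then j else x)"
  by (simp add: sigma_def transpose_def)

lemma sigma_sigma[simp]: "sigma j (sigma j x) = x"
  by (simp add: sigma_def)

lemma sigma_comp_sigma[simp]: "sigma j \<circ> sigma j = id"
  by (simp add: sigma_def)

lemma sigma_le_other: "k \<noteq> j \<Longrightarrow> sigma k y \<le> j \<longleftrightarrow> y \<le> j"
  by (auto simp: sigma_apply)

lemma sigma_le_same: "sigma j y \<le> j \<longleftrightarrow> (y \<le> j \<and> y \<noteq> j) \<or> y = Suc j"
  by (auto simp: sigma_apply)

lemma sigma_less: "x \<noteq> y \<Longrightarrow> (sigma j y < sigma j x) \<longleftrightarrow> ((y < x) \<noteq> ({x,y} = {j, Suc j}))"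
  by (auto simp: sigma_apply doubleton_eq_iff)

lemma word_perm_Nil[simp]: "word_perm [] = id"
  by (simp add: word_perm_def)

lemma word_perm_Cons[simp]: "word_perm (j # t) = sigma j \<circ> word_perm t"
  by (simp add: word_perm_def)

lemma word_perm_append: "word_perm (xs @ ys) = word_perm xs \<circ> word_perm ys"
  by (induction xs) (auto simp: comp_assoc)

lemma is_word_Cons[simp]: "is_word n (j # t) \<longleftrightarrow> j \<in> {1..<n} \<and> is_word n t"
  by (simp add: is_word_def)

lemma is_word_append[simp]: "is_word n (xs @ ys) \<longleftrightarrow> is_word n xs \<and> is_word n ys"
  by (auto simp add: is_word_def)

lemma is_word_rev[simp]: "is_word n (rev xs) \<longleftrightarrow> is_word n xs"
  by (simp add: is_word_def)

lemma sigma_permutes: "j \<in> {1..<n} \<Longrightarrow> sigma j permutes {1..n}"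
  unfolding sigma_def by (rule permutes_swap_id) auto

lemma word_perm_permutes: "is_word n t \<Longrightarrow> word_perm t permutes {1..n}"
proof (induction t)
  case Nil then show ?case by (simp only: word_perm_Nil permutes_id)
next
  case (Cons j t)
  then have "word_perm t permutes {1..n}" "sigma j permutes {1..n}" using sigma_permutes[of j n] by auto
  then show ?case by (metis permutes_compose word_perm_Cons)
qed

lemma word_perm_rev_inv:
  "word_perm (rev t) \<circ> word_perm t = id \<and> word_perm t \<circ> word_perm (rev t) = id"
proof (induction t)
  case Nil then show ?case by simp
next
  case (Cons j t)
  have "word_perm (rev (j # t)) = word_perm (rev t) \<circ> sigma j"
    by (simp add: word_perm_append)
  have e1: "word_perm (rev t) \<circ> sigma j \<circ> (sigma j \<circ> word_perm t) = word_perm (rev t) \<circ> word_perm t"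
    by (simp add: fun_eq_iff)
  have e2: "sigma j \<circ> word_perm t \<circ> (word_perm (rev t) \<circ> sigma j) = sigma j \<circ> (word_perm t \<circ> word_perm (rev t)) \<circ> sigma j"
    by (simp add: fun_eq_iff)
  show ?case using Cons e1 e2 \<open>word_perm (rev (j # t)) = _\<close>
    by (simp only: word_perm_Cons) simp
qed

lemma word_perm_preserve: "i \<notin> set u \<Longrightarrow> word_perm u y \<le> i \<longleftrightarrow> y \<le> i"
  by (induction u arbitrary: y) (auto simp: sigma_le_other)

lemma word_perm_fix: "(\<forall>k\<in>set u. k \<noteq> x \<and> Suc k \<noteq> x) \<Longrightarrow> word_perm u x = x"
  by (induction u) (auto simp: sigma_apply)


definition invs :: "nat \<Rightarrow> (nat \<Rightarrow> nat) \<Rightarrow> (nat \<times> nat) set" where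
  "invs n f = {(a,b). a \<in> {1..n} \<and> b \<in> {1..n} \<and> a < b \<and> f b < f a}"

definition ninv :: "nat \<Rightarrow> (nat \<Rightarrow> nat) \<Rightarrow> nat" where
  "ninv n f = card (invs n f)"

lemma finite_invs[simp]: "finite (invs n f)"
  by (rule finite_subset[of _ "{1..n} \<times> {1..n}"]) (auto simp: invs_def)

lemma perm_val_in:
  assumes "f permutes {1..n}" "f p = j" "j \<in> {1..n}"
  shows "p \<in> {1..n}"
  using assms permutes_in_image[OF assms(1)] by auto

lemma step_invs:
  assumes f: "f permutes {1..n}" and j: "j \<in> {1..<n}" and p: "f p = j" and q: "f q = Suc j"
  shows "p < q \<Longrightarrow> ninv n (sigma j \<circ> f) = Suc (ninv n f)"
    and "q < p \<Longrightarrow> Suc (ninv n (sigma j \<circ> f)) = ninv n f"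
proof -
  have pD: "p \<in> {1..n}" using perm_val_in[OF f p] j by auto
  have qD: "q \<in> {1..n}" using perm_val_in[OF f q] j by auto
  have inj: "inj f" using permutes_inj[OF f] .
  have key: "(sigma j (f b) < sigma j (f a)) \<longleftrightarrow> ((f b < f a) \<noteq> ({a,b} = {p,q}))"
    if ab: "a \<noteq> b" for a b
  proof -
    have ne: "f a \<noteq> f b" using inj ab by (meson injD)
    have "{f a, f b} = {j, Suc j} \<longleftrightarrow> f ` {a,b} = f ` {p,q}" using p q by simp
    also have "\<dots> \<longleftrightarrow> {a,b} = {p,q}" using inj_image_eq_iff[OF inj, of "{a,b}" "{p,q}"] by blast
    finally have e: "{f a, f b} = {j, Suc j} \<longleftrightarrow> {a,b} = {p,q}" .
    show ?thesis using sigma_less[OF ne, of j] e by simp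
  qed
  have key2: "(sigma j (f b) < sigma j (f a)) \<longleftrightarrow> ((f b < f a) \<noteq> ((a,b) = (p,q)))"
    if ab: "a < b" "p < q" for a b
  proof -
    have "{a,b} = {p,q} \<longleftrightarrow> (a,b) = (p,q)" using ab by (auto simp: doubleton_eq_iff)
    then show ?thesis using key[of a b] ab by simp
  qed
  have key3: "(sigma j (f b) < sigma j (f a)) \<longleftrightarrow> ((f b < f a) \<noteq> ((a,b) = (q,p)))"
    if ab: "a < b" "q < p" for a b
  proof -
    have "{a,b} = {p,q} \<longleftrightarrow> (a,b) = (q,p)" using ab by (auto simp: doubleton_eq_iff)
    then show ?thesis using key[of a b] ab by simp
  qed
  show "p < q \<Longrightarrow> ninv n (sigma j \<circ> f) = Suc (ninv n f)"
  proof -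
    assume pq: "p < q"
    have "invs n (sigma j \<circ> f) = insert (p,q) (invs n f)"
    proof (rule set_eqI, clarify)
      fix a b
      show "(a,b) \<in> invs n (sigma j \<circ> f) \<longleftrightarrow> (a,b) \<in> insert (p,q) (invs n f)"
      proof (cases "a < b")
        case True
        then show ?thesis using key2[OF True pq] pD qD p q unfolding invs_def by auto
      next
        case False
        then show ?thesis using pq unfolding invs_def by auto
      qed
    qed
    moreover have "(p,q) \<notin> invs n f" using p q by (simp add: invs_def)
    ultimately show ?thesis by (simp add: ninv_def)
  qed
  show "q < p \<Longrightarrow> Suc (ninv n (sigma j \<circ> f)) = ninv n f"
  proof -
    assume pq: "q < p"
    have "invs n (sigma j \<circ> f) = invs n f - {(q,p)}"
    proof (rule set_eqI, clarify)
      fix a b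
      show "(a,b) \<in> invs n (sigma j \<circ> f) \<longleftrightarrow> (a,b) \<in> invs n f - {(q,p)}"
      proof (cases "a < b")
        case True
        then show ?thesis using key3[OF True pq] pD qD p q unfolding invs_def by auto
      next
        case False
        then show ?thesis using pq unfolding invs_def by auto
      qed
    qed
    moreover have "(q,p) \<in> invs n f" using p q pq pD qD by (simp add: invs_def)
    ultimately show ?thesis unfolding ninv_def
      by (metis card_Suc_Diff1 finite_invs)
  qed
qed

lemma exists_pre:
  assumes "f permutes {1..n}" "j \<in> {1..n}"
  shows "\<exists>p. f p = j"
  using permutes_surj[OF assms(1)] by (metis surjD)

lemma ninv_le_length: "is_word n t \<Longrightarrow> ninv n (word_perm t) \<le> length t"
proof (induction t)
  case Nil
  have "invs n (word_perm []) = {}" by (auto simp: invs_def)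
  then show ?case by (simp add: ninv_def del: word_perm_Nil)
next
  case (Cons j t)
  let ?f = "word_perm t"
  have f: "?f permutes {1..n}" using Cons word_perm_permutes by auto
  have j: "j \<in> {1..<n}" using Cons by auto
  obtain p where p: "?f p = j" using exists_pre[OF f, of j] j by auto
  obtain q where q: "?f q = Suc j" using exists_pre[OF f, of "Suc j"] j by auto
  have "p \<noteq> q" using p q by auto
  then have bnd: "ninv n (sigma j \<circ> ?f) \<le> Suc (ninv n ?f)"
    using step_invs[OF f j p q] by (cases "p < q") auto
  have e: "ninv n (word_perm (j#t)) = ninv n (sigma j \<circ> ?f)" by (simp only: word_perm_Cons)
  have ih: "ninv n ?f \<le> length t" using Cons by auto
  show ?case using e bnd ih by (simp only: length_Cons)
qed

definition tight :: "nat \<Rightarrow> nat list \<Rightarrow> bool" where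
  "tight n t \<longleftrightarrow> is_word n t \<and> length t = ninv n (word_perm t)"

lemma tight_Cons:
  assumes "tight n (j # t)"
  shows "tight n t" "word_perm t p = j \<Longrightarrow> word_perm t q = Suc j \<Longrightarrow> p < q"
proof -
  let ?f = "word_perm t"
  have w: "is_word n t" "j \<in> {1..<n}" using assms by (auto simp: tight_def)
  have f: "?f permutes {1..n}" using w word_perm_permutes by auto
  have le: "ninv n ?f \<le> length t" using ninv_le_length w by auto
  obtain p where p: "?f p = j" using exists_pre[OF f, of j] w by auto
  obtain q where q: "?f q = Suc j" using exists_pre[OF f, of "Suc j"] w by auto
  have "p \<noteq> q" using p q by auto
  have "\<not> q < p"
  proof
    assume "q < p"
    from step_invs(2)[OF f w(2) p q this] assms le show False by (auto simp: tight_def)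
  qed
  then have pq: "p < q" using \<open>p \<noteq> q\<close> by simp
  then show "tight n t" using step_invs(1)[OF f w(2) p q] assms le w by (auto simp: tight_def)
  show "word_perm t p' = j \<Longrightarrow> word_perm t q' = Suc j \<Longrightarrow> p' < q'" for p' q'
    using pq p q permutes_inj[OF f] by (metis injD)
qed

lemma tight_suffix: "tight n (u @ v) \<Longrightarrow> tight n v"
  by (induction u) (auto dest: tight_Cons(1))

lemma ninv_inverse_le:
  assumes f: "f permutes {1..n}" and g: "g permutes {1..n}" and gf: "g \<circ> f = id" and fg: "f \<circ> g = id"
  shows "ninv n g \<le> ninv n f"
proof -
  let ?h = "\<lambda>(a,b). (g b, g a)"
  have "inj ?h" using permutes_inj[OF g] by (auto simp: inj_def)
  moreover have "?h ` invs n g \<subseteq> invs n f"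
  proof
    fix x assume "x \<in> ?h ` invs n g"
    then obtain a b where ab: "(a,b) \<in> invs n g" "x = (g b, g a)" by auto
    have "f (g a) = a" "f (g b) = b" using fg by (auto simp: fun_eq_iff)
    then show "x \<in> invs n f" using ab permutes_in_image[OF g] unfolding invs_def by auto
  qed
  ultimately show ?thesis unfolding ninv_def
    by (metis card_inj_on_le finite_invs inj_on_subset subset_UNIV)
qed

lemma tight_rev: "tight n t \<Longrightarrow> tight n (rev t)"
proof -
  assume t: "tight n t"
  have w: "is_word n t" using t by (simp add: tight_def)
  have f: "word_perm t permutes {1..n}" "word_perm (rev t) permutes {1..n}"
    using w word_perm_permutes by auto
  have "ninv n (word_perm (rev t)) = ninv n (word_perm t)"
    using ninv_inverse_le[OF f(1) f(2)] ninv_inverse_le[OF f(2) f(1)] word_perm_rev_inv[of t]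
    by (simp add: le_antisym)
  then show ?thesis using t by (simp add: tight_def)
qed

lemma tight_prefix: "tight n (u @ v) \<Longrightarrow> tight n u"
  using tight_rev tight_suffix[of n "rev v" "rev u"] by (metis rev_append rev_rev_ident)


lemma ivt_desc:
  fixes g :: "nat \<Rightarrow> nat"
  shows "lo \<le> hi \<Longrightarrow> g hi < g lo \<Longrightarrow> \<exists>v. lo \<le> v \<and> v < hi \<and> g (Suc v) < g v"
proof (induction hi)
  case 0 then show ?case by simp
next
  case (Suc hi)
  show ?case
  proof (cases "g (Suc hi) < g hi")
    case True
    then show ?thesis using Suc.prems
      by (metis le_SucE lessI order_less_irrefl)
  next
    case False
    then have "lo \<le> hi" "g hi < g lo" using Suc.prems by (auto simp: le_Suc_eq)
    then show ?thesis using Suc.IH by (meson less_SucI)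
  qed
qed

lemma no_invs_id:
  assumes f: "f permutes {1..n}" and ni: "invs n f = {}"
  shows "f = id"
proof
  fix x
  show "f x = id x"
  proof (cases "x \<in> {1..n}")
    case False then show ?thesis using permutes_not_in[OF f] by simp
  next
    case True
    have inj: "inj f" using permutes_inj[OF f] .
    have fx: "f x \<in> {1..n}" using True permutes_in_image[OF f] by auto
    have mono: "a \<in> {1..n} \<Longrightarrow> b \<in> {1..n} \<Longrightarrow> a < b \<Longrightarrow> f a < f b" for a b
    proof -
      assume h: "a \<in> {1..n}" "b \<in> {1..n}" "a < b"
      have "(a,b) \<notin> invs n f" using ni by simp
      then have "\<not> f b < f a" using h by (simp add: invs_def)
      moreover have "f a \<noteq> f b" using inj h(3) by (metis injD less_irrefl)
      ultimately show "f a < f b" by simp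
    qed
    have "card {1..<x} \<le> card {1..<f x}"
    proof (rule card_inj_on_le[where f=f])
      show "inj_on f {1..<x}" by (rule inj_on_subset[OF inj subset_UNIV])
      show "f ` {1..<x} \<subseteq> {1..<f x}"
      proof
        fix y assume "y \<in> f ` {1..<x}"
        then obtain a where a: "a \<in> {1..<x}" "y = f a" by auto
        then have "a \<in> {1..n}" using True by auto
        then have "f a \<in> {1..n}" using permutes_in_image[OF f] by auto
        then show "y \<in> {1..<f x}" using mono[of a x] a True by auto
      qed
    qed simp
    moreover have "card {Suc x..n} \<le> card {Suc (f x)..n}"
    proof (rule card_inj_on_le[where f=f])
      show "inj_on f {Suc x..n}" by (rule inj_on_subset[OF inj subset_UNIV])
      show "f ` {Suc x..n} \<subseteq> {Suc (f x)..n}"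
      proof
        fix y assume "y \<in> f ` {Suc x..n}"
        then obtain a where a: "a \<in> {Suc x..n}" "y = f a" by auto
        then have "a \<in> {1..n}" using True by auto
        then have "f a \<in> {1..n}" using permutes_in_image[OF f] by auto
        then show "y \<in> {Suc (f x)..n}" using mono[of x a] a True by auto
      qed
    qed simp
    ultimately show ?thesis using True fx by auto
  qed
qed

lemma bubble:
  "\<forall>f. f permutes {1..n} \<longrightarrow> ninv n f = k \<longrightarrow> (\<exists>t. is_word n t \<and> word_perm t = f \<and> length t = k)"
proof (induction k)
  case 0
  show ?case
  proof (intro allI impI)
    fix f assume f: "f permutes {1..n}" "ninv n f = 0"
    then have "invs n f = {}" by (simp add: ninv_def)
    then have "f = id" using no_invs_id[OF f(1)] by simp
    then show "\<exists>t. is_word n t \<and> word_perm t = f \<and> length t = 0"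
      by (intro exI[of _ "[]"]) (simp add: is_word_def)
  qed
next
  case (Suc k)
  show ?case
  proof (intro allI impI)
    fix f assume f: "f permutes {1..n}" and nf: "ninv n f = Suc k"
    then have "invs n f \<noteq> {}" by (auto simp: ninv_def)
    then obtain a b where ab: "a \<in> {1..n}" "b \<in> {1..n}" "a < b" "f b < f a"
      unfolding invs_def by auto
    let ?g = "inv f"
    have gf: "\<And>x. ?g (f x) = x" using permutes_inverses(2)[OF f] .
    have fg: "\<And>x. f (?g x) = x" using permutes_inverses(1)[OF f] .
    obtain v where v: "f b \<le> v" "v < f a" "?g (Suc v) < ?g v"
    proof -
      have "?g (f a) < ?g (f b)" using gf ab by simp
      moreover have "f b \<le> f a" using ab by simp
      ultimately show ?thesis using ivt_desc[of "f b" "f a" ?g] that by blast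
    qed
    have fbD: "f b \<in> {1..n}" "f a \<in> {1..n}" using ab(1,2) permutes_in_image[OF f] by blast+
    then have vj: "v \<in> {1..<n}" using v(1,2) by auto
    have p1: "f (?g v) = v" by (rule fg)
    have q1: "f (?g (Suc v)) = Suc v" by (rule fg)
    have "Suc (ninv n (sigma v \<circ> f)) = ninv n f"
      by (rule step_invs(2)[OF f vj p1 q1 v(3)])
    then have nk: "ninv n (sigma v \<circ> f) = k" using nf by simp
    have "sigma v \<circ> f permutes {1..n}"
      using permutes_compose[OF f sigma_permutes[OF vj]] .
    then obtain t where t: "is_word n t" "word_perm t = sigma v \<circ> f" "length t = k"
      using Suc.IH nk by blast
    have "word_perm (v # t) = sigma v \<circ> (sigma v \<circ> f)" using t(2) by simp
    also have "\<dots> = f" by (simp add: fun_eq_iff)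
    finally have "word_perm (v # t) = f" .
    then show "\<exists>t. is_word n t \<and> word_perm t = f \<and> length t = Suc k"
      using t vj by (intro exI[of _ "v # t"]) auto
  qed
qed

lemma reduced_tight: "reduced_word n w t \<Longrightarrow> tight n t"
proof -
  assume r: "reduced_word n w t"
  then have w: "is_word n t" "word_perm t = w" by (auto simp: reduced_word_def)
  have f: "w permutes {1..n}" using w word_perm_permutes by auto
  obtain t0 where t0: "is_word n t0" "word_perm t0 = w" "length t0 = ninv n w"
    using bubble f by blast
  have "length t \<le> length t0" using r t0 by (auto simp: reduced_word_def)
  moreover have "ninv n w \<le> length t" using ninv_le_length w by auto
  ultimately show ?thesis using w t0 by (simp add: tight_def)
qed


definition cnt :: "nat \<Rightarrow> (nat \<Rightarrow> nat) \<Rightarrow> nat \<Rightarrow> nat" where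
  "cnt j f m = card {x. 1 \<le> x \<and> x \<le> m \<and> f x \<le> j}"

lemma finite_cntset[simp]: "finite {x. 1 \<le> x \<and> x \<le> (m::nat) \<and> P x}"
proof -
  have "{x. 1 \<le> x \<and> x \<le> m \<and> P x} \<subseteq> {1..m}" by auto
  then show ?thesis by (rule finite_subset) simp
qed

lemma cnt_other: "k \<noteq> j \<Longrightarrow> cnt j (sigma k \<circ> f) m = cnt j f m"
  by (simp add: cnt_def sigma_le_other)

lemma cnt_step:
  assumes f: "f permutes {1..n}" and j: "j \<in> {1..<n}" and p: "f p = j" and q: "f q = Suc j"
    and pq: "p < q"
  shows "cnt j (sigma j \<circ> f) m \<le> cnt j f m"
    and "p \<le> m \<Longrightarrow> m < q \<Longrightarrow> cnt j (sigma j \<circ> f) m < cnt j f m"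
proof -
  have pD: "p \<in> {1..n}" using perm_val_in[OF f p] j by auto
  have inj: "inj f" using permutes_inj[OF f] .
  have fp: "f x = j \<longleftrightarrow> x = p" for x using inj p by (metis injD)
  have fq: "f x = Suc j \<longleftrightarrow> x = q" for x using inj q by (metis injD)
  define X where "X = {x. 1 \<le> x \<and> x \<le> m \<and> f x \<le> j}"
  define X' where "X' = {x. 1 \<le> x \<and> x \<le> m \<and> ((f x \<le> j \<and> x \<noteq> p) \<or> x = q)}"
  have cX: "cnt j f m = card X" by (simp add: cnt_def X_def)
  have cX': "cnt j (sigma j \<circ> f) m = card X'"
    unfolding cnt_def X'_def using fp fq by (simp add: sigma_le_same)
  have fin: "finite X" "finite X'" by (simp_all add: X_def X'_def)
  have "card X' \<le> card X \<and> (p \<le> m \<longrightarrow> m < q \<longrightarrow> card X' < card X)"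
  proof (cases "q \<le> m")
    case True
    then have e: "X' = insert q (X - {p})" using pq pD unfolding X_def X'_def by auto
    have qX: "q \<notin> X - {p}" using q by (simp add: X_def)
    have pX: "p \<in> X" using p pD pq True by (simp add: X_def)
    have c1: "card (X - {p}) = card X - 1" using fin(1) pX by simp
    have c2: "card X > 0" using fin(1) pX card_gt_0_iff by blast
    have "card X' = Suc (card (X - {p}))" unfolding e using fin(1) qX by simp
    then have "card X' = card X" using c1 c2 by simp
    then show ?thesis using True by simp
  next
    case False
    then have e: "X' = X - {p}" using pq pD unfolding X_def X'_def by auto
    then have "card X' \<le> card X" using fin by (simp add: card_mono)
    moreover have "p \<le> m \<longrightarrow> card X' < card X"
    proof
      assume "p \<le> m"
      then have "p \<in> X" using p pD by (simp add: X_def)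
      then show "card X' < card X" unfolding e by (rule card_Diff1_less[OF fin(1)])
    qed
    ultimately show ?thesis by auto
  qed
  then show "cnt j (sigma j \<circ> f) m \<le> cnt j f m"
    and "p \<le> m \<Longrightarrow> m < q \<Longrightarrow> cnt j (sigma j \<circ> f) m < cnt j f m"
    using cX cX' by auto
qed

lemma cnt_bound:
  assumes f: "f permutes {1..n}"
  shows "cnt j f m \<le> min m j"
proof -
  let ?X = "{x. 1 \<le> x \<and> x \<le> m \<and> f x \<le> j}"
  have "card ?X \<le> card {1..m}" by (rule card_mono) auto
  moreover have "card ?X \<le> card {1..j}"
  proof (rule card_inj_on_le[where f=f])
    show "inj_on f ?X" by (rule inj_on_subset[OF permutes_inj[OF f] subset_UNIV])
    show "f ` ?X \<subseteq> {1..j}"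
    proof
      fix y assume "y \<in> f ` ?X"
      then obtain x where x: "1 \<le> x" "f x \<le> j" "y = f x" by auto
      have "1 \<le> f x"
      proof (cases "x \<in> {1..n}")
        case True then show ?thesis using permutes_in_image[OF f] by auto
      next
        case False then show ?thesis using permutes_not_in[OF f] x by auto
      qed
      then show "y \<in> {1..j}" using x by auto
    qed
  qed simp
  ultimately show ?thesis by (simp add: cnt_def)
qed

lemma cnt_mono: "tight n (u @ v) \<Longrightarrow> cnt j (word_perm (u @ v)) m \<le> cnt j (word_perm v) m"
proof (induction u)
  case Nil then show ?case by simp
next
  case (Cons k u)
  have t: "tight n (k # (u @ v))" using Cons.prems by simp
  have tu: "tight n (u @ v)" using tight_Cons(1)[OF t] .
  let ?f = "word_perm (u @ v)"
  have w: "is_word n (u @ v)" "k \<in> {1..<n}" using t by (auto simp: tight_def)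
  have f: "?f permutes {1..n}" using w word_perm_permutes by blast
  have c: "cnt j (sigma k \<circ> ?f) m \<le> cnt j ?f m"
  proof (cases "k = j")
    case False then show ?thesis by (simp add: cnt_other)
  next
    case True
    obtain p where p: "?f p = k" using exists_pre[OF f, of k] w by auto
    obtain q where q: "?f q = Suc k" using exists_pre[OF f, of "Suc k"] w by auto
    have pq: "p < q" using tight_Cons(2)[OF t p q] .
    show ?thesis using cnt_step(1)[OF f w(2) p q pq] True by simp
  qed
  have e: "word_perm ((k # u) @ v) = sigma k \<circ> ?f" by simp
  show ?case unfolding e using c Cons.IH[OF tu] by (rule order_trans)
qed

lemma occ:
  assumes t: "tight n (u @ j # v)" and p: "word_perm v p = j" and q: "word_perm v q = Suc j"
  shows "p < q" "p \<le> m \<Longrightarrow> m < q \<Longrightarrow> cnt j (word_perm (u @ j # v)) m < min m j"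
proof -
  have tv: "tight n (j # v)" using tight_suffix[OF t] .
  show pq: "p < q" using tight_Cons(2)[OF tv p q] .
  have w: "is_word n v" "j \<in> {1..<n}" using tv by (auto simp: tight_def)
  have f: "word_perm v permutes {1..n}" using w word_perm_permutes by blast
  assume m: "p \<le> m" "m < q"
  have "cnt j (word_perm (u @ j # v)) m \<le> cnt j (word_perm (j # v)) m"
    using cnt_mono[OF t] .
  also have "\<dots> = cnt j (sigma j \<circ> word_perm v) m" by simp
  also have "\<dots> < cnt j (word_perm v) m" using cnt_step(2)[OF f w(2) p q pq m] .
  also have "\<dots> \<le> min m j" using cnt_bound[OF f] .
  finally show "cnt j (word_perm (u @ j # v)) m < min m j" .
qed

lemma no_occ:
  assumes t: "tight n t" and pres: "\<forall>x. word_perm t x \<le> j \<longleftrightarrow> x \<le> j"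
  shows "j \<notin> set t"
proof
  assume "j \<in> set t"
  then obtain u v where uv: "t = u @ j # v" by (meson split_list)
  have tv: "tight n (j # v)" using tight_suffix[of n u "j # v"] t uv by simp
  have w: "is_word n v" "j \<in> {1..<n}" using tv by (auto simp: tight_def)
  have f: "word_perm v permutes {1..n}" using w word_perm_permutes by blast
  obtain p where p: "word_perm v p = j" using exists_pre[OF f, of j] w by auto
  obtain q where q: "word_perm v q = Suc j" using exists_pre[OF f, of "Suc j"] w by auto
  have pq: "p < q" using occ(1)[of n u j v p q] t uv p q by simp
  have "cnt j (word_perm t) p < min p j" using occ(2)[of n u j v p q p] t uv p q pq by simp
  moreover have "cnt j (word_perm t) p = card {1..min p j}"
  proof -
    have "{x. 1 \<le> x \<and> x \<le> p \<and> word_perm t x \<le> j} = {1..min p j}"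
    proof (rule set_eqI)
      fix x show "x \<in> {x. 1 \<le> x \<and> x \<le> p \<and> word_perm t x \<le> j} \<longleftrightarrow> x \<in> {1..min p j}"
        using pres[rule_format, of x] by auto
    qed
    then show ?thesis by (simp add: cnt_def)
  qed
  ultimately show False by simp
qed

lemma range_occ:
  assumes t: "tight n t" and S: "\<forall>x\<ge>1. word_perm t x \<le> j \<longleftrightarrow> (x \<le> j \<and> x \<noteq> a) \<or> x = b"
    and ab: "1 \<le> a" "a \<le> j" "j < b"
    and uv: "t = u @ j # v" and p: "word_perm v p = j" and q: "word_perm v q = Suc j"
  shows "a \<le> p \<and> p < q \<and> q \<le> b"
proof -
  have t': "tight n (u @ j # v)" using t uv by simp
  have pq: "p < q" using occ(1)[OF t' p q] .
  have lt: "\<And>m. p \<le> m \<Longrightarrow> m < q \<Longrightarrow> cnt j (word_perm t) m < min m j"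
    using occ(2)[OF t' p q] uv by simp
  have c1: "cnt j (word_perm t) m = m" if "m < a" for m
  proof -
    have "{x. 1 \<le> x \<and> x \<le> m \<and> word_perm t x \<le> j} = {1..m}"
    proof (rule set_eqI)
      fix x show "x \<in> {x. 1 \<le> x \<and> x \<le> m \<and> word_perm t x \<le> j} \<longleftrightarrow> x \<in> {1..m}"
        using S[rule_format, of x] that ab by auto
    qed
    then show ?thesis by (simp add: cnt_def)
  qed
  have c2: "cnt j (word_perm t) m = j" if "b \<le> m" for m
  proof -
    have "{x. 1 \<le> x \<and> x \<le> m \<and> word_perm t x \<le> j} = insert b ({1..j} - {a})"
    proof (rule set_eqI)
      fix x show "x \<in> {x. 1 \<le> x \<and> x \<le> m \<and> word_perm t x \<le> j} \<longleftrightarrow> x \<in> insert b ({1..j} - {a})"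
        using S[rule_format, of x] that ab by auto
    qed
    moreover have "card (insert b ({1..j} - {a})) = j" using ab by simp
    ultimately show ?thesis by (simp add: cnt_def)
  qed
  have "a \<le> p"
  proof (rule ccontr)
    assume "\<not> a \<le> p"
    then have "p < a" by simp
    then show False using lt[of p] pq c1[of p] ab by simp
  qed
  moreover have "q \<le> b"
  proof (rule ccontr)
    assume "\<not> q \<le> b"
    then have "max p b < q" "p \<le> max p b" "b \<le> max p b" using pq by auto
    then show False using lt[of "max p b"] c2[of "max p b"] ab by simp
  qed
  ultimately show ?thesis using pq by simp
qed

lemma struct:
  assumes u: "is_word n u" and v: "is_word n v" and iu: "i \<notin> set u" and iv: "i \<notin> set v"
    and i: "i \<in> {1..<n}" and a: "word_perm v a = i" and b: "word_perm v b = Suc i"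
  shows "a \<le> i" "i < b" "1 \<le> a" "b \<le> n"
    "\<forall>x. word_perm (u @ i # v) x \<le> i \<longleftrightarrow> (x \<le> i \<and> x \<noteq> a) \<or> x = b"
    "word_perm (u @ i # v) a = word_perm u (Suc i)"
    "word_perm (u @ i # v) b = word_perm u i"
proof -
  have f: "word_perm v permutes {1..n}" using v word_perm_permutes by blast
  have inj: "inj (word_perm v)" using permutes_inj[OF f] .
  have fa: "word_perm v x = i \<longleftrightarrow> x = a" for x using inj a by (metis injD)
  have fb: "word_perm v x = Suc i \<longleftrightarrow> x = b" for x using inj b by (metis injD)
  show "a \<le> i" using word_perm_preserve[OF iv, of a] a by simp
  show "i < b" using word_perm_preserve[OF iv, of b] b by simp
  show "1 \<le> a" using perm_val_in[OF f a] i by auto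
  show "b \<le> n" using perm_val_in[OF f b] i by auto
  have W: "word_perm (u @ i # v) x = word_perm u (sigma i (word_perm v x))" for x
    by (simp add: word_perm_append)
  show "\<forall>x. word_perm (u @ i # v) x \<le> i \<longleftrightarrow> (x \<le> i \<and> x \<noteq> a) \<or> x = b"
  proof
    fix x
    have "word_perm (u @ i # v) x \<le> i \<longleftrightarrow> sigma i (word_perm v x) \<le> i"
      using W word_perm_preserve[OF iu] by simp
    also have "\<dots> \<longleftrightarrow> (word_perm v x \<le> i \<and> word_perm v x \<noteq> i) \<or> word_perm v x = Suc i"
      by (rule sigma_le_same)
    also have "\<dots> \<longleftrightarrow> (x \<le> i \<and> x \<noteq> a) \<or> x = b"
      using word_perm_preserve[OF iv, of x] fa fb by simp
    finally show "word_perm (u @ i # v) x \<le> i \<longleftrightarrow> (x \<le> i \<and> x \<noteq> a) \<or> x = b" .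
  qed
  show "word_perm (u @ i # v) a = word_perm u (Suc i)" using W a by (simp add: sigma_apply)
  show "word_perm (u @ i # v) b = word_perm u i" using W b by (simp add: sigma_apply)
qed

lemma nth_mid: "length u < k \<Longrightarrow> (u @ x # v) ! k = v ! (k - Suc (length u))"
proof -
  assume k: "length u < k"
  have "(u @ x # v) ! k = (x # v) ! (k - length u)" using k by (simp add: nth_append)
  moreover have "k - length u = Suc (k - Suc (length u))" using k by arith
  ultimately show ?thesis by simp
qed

lemma between_split:
  assumes iu: "i \<notin> set u" and iv: "i \<notin> set v"
  shows "between (u @ i # v) i j \<longleftrightarrow> (j \<in> set u \<and> j \<in> set v)"
proof
  assume "between (u @ i # v) i j"
  then obtain a k b where h: "a < k" "k < b" "b < length (u @ i # v)"
    "(u @ i # v) ! k = i" "(u @ i # v) ! a = j" "(u @ i # v) ! b = j"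
    unfolding between_def by blast
  have k: "k = length u"
  proof (rule ccontr)
    assume "k \<noteq> length u"
    then consider "k < length u" | "length u < k" by linarith
    then show False
    proof cases
      case 1 then have "u ! k = i" using h(4) by (simp add: nth_append)
      then show False using iu 1 by (metis nth_mem)
    next
      case 2
      then have "v ! (k - Suc (length u)) = i" using h(4) nth_mid[of u k i v] by simp
      moreover have "k - Suc (length u) < length v" using 2 h(2) h(3) by simp
      ultimately show False using iv by (metis nth_mem)
    qed
  qed
  have "u ! a = j" "a < length u" using h(1) h(5) k by (auto simp: nth_append)
  then have "j \<in> set u" by (metis nth_mem)
  moreover have "v ! (b - Suc (length u)) = j" using h(2) h(6) k nth_mid[of u b i v] by simp
  moreover have "b - Suc (length u) < length v" using h(2) h(3) k by simp
  ultimately show "j \<in> set u \<and> j \<in> set v" by (metis nth_mem)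
next
  assume "j \<in> set u \<and> j \<in> set v"
  then obtain a b where a: "a < length u" "u ! a = j" and b: "b < length v" "v ! b = j"
    by (meson in_set_conv_nth)
  show "between (u @ i # v) i j" unfolding between_def
  proof (intro exI conjI)
    show "a < length u" by (rule a(1))
    show "length u < length u + 1 + b" by simp
    show "length u + 1 + b < length (u @ i # v)" using b by simp
    show "(u @ i # v) ! length u = i" by simp
    show "(u @ i # v) ! a = j" using a by (simp add: nth_append)
    show "(u @ i # v) ! (length u + 1 + b) = j" using b by (simp add: nth_append)
  qed
qed


lemma word_perm_inj: "inj (word_perm u)"
proof (rule inj_on_inverseI)
  fix x show "word_perm (rev u) (word_perm u x) = x"
    using word_perm_rev_inv[of u] by (metis comp_apply id_apply)
qed

lemma word_perm_rev_eq:
  assumes "word_perm t = word_perm s"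
  shows "word_perm (rev t) = word_perm (rev s)"
proof -
  have "word_perm (rev t) = word_perm (rev t) \<circ> (word_perm s \<circ> word_perm (rev s))"
    using word_perm_rev_inv[of s] by simp
  also have "\<dots> = (word_perm (rev t) \<circ> word_perm t) \<circ> word_perm (rev s)"
    using assms by (simp add: comp_assoc)
  also have "\<dots> = word_perm (rev s)" using word_perm_rev_inv[of t] by simp
  finally show ?thesis .
qed

lemma pres_up:
  assumes "i \<notin> set u" "word_perm u (Suc i) = Suc i"
  shows "\<forall>x. word_perm u x \<le> Suc i \<longleftrightarrow> x \<le> Suc i"
proof
  fix x
  have p: "word_perm u x \<le> i \<longleftrightarrow> x \<le> i" using word_perm_preserve[OF assms(1)] .
  have "word_perm u x = Suc i \<longleftrightarrow> x = Suc i"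
    using assms(2) word_perm_inj[of u] by (metis injD)
  then show "word_perm u x \<le> Suc i \<longleftrightarrow> x \<le> Suc i" using p by (auto simp: le_Suc_eq)
qed

lemma pres_down:
  assumes "i \<notin> set u" "word_perm u i = i" "1 \<le> i"
  shows "\<forall>x. word_perm u x \<le> i - 1 \<longleftrightarrow> x \<le> i - 1"
proof
  fix x
  have p: "word_perm u x \<le> i \<longleftrightarrow> x \<le> i" using word_perm_preserve[OF assms(1)] .
  have "word_perm u x = i \<longleftrightarrow> x = i"
    using assms(2) word_perm_inj[of u] by (metis injD)
  then show "word_perm u x \<le> i - 1 \<longleftrightarrow> x \<le> i - 1" using p assms(3) by auto
qed

lemma casework:
  fixes w :: "nat \<Rightarrow> nat"
  assumes inj: "inj w" and S: "\<forall>x\<ge>1. w x \<le> i \<longleftrightarrow> (x \<le> i \<and> x \<noteq> a) \<or> x = b"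
    and ab: "1 \<le> a" "a \<le> i" "i < b"
    and C1: "w a = Suc i \<or> b = Suc i" and C2: "w b = i \<or> a = i"
    and pq: "a \<le> p" "p < q" "q \<le> b" and xy: "w b \<le> w q" "w q < w p" "w p \<le> w a"
  shows "p = a \<and> q = b"
proof -
  have wi: "\<And>x y. w x = w y \<Longrightarrow> x = y" using inj by (meson injD)
  have Sp: "w p \<le> i \<longleftrightarrow> (p \<le> i \<and> p \<noteq> a) \<or> p = b" using S pq ab by auto
  have Sq: "w q \<le> i \<longleftrightarrow> (q \<le> i \<and> q \<noteq> a) \<or> q = b" using S pq ab by auto
  show ?thesis
  proof (cases "w a = Suc i")
    case A: True
    show ?thesis
    proof (cases "w b = i")
      case G: True
      then have "w q = i" "w p = Suc i" using xy A by auto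
      then show ?thesis using wi A G by metis
    next
      case False
      then have D: "a = i" using C2 by simp
      have "q = b" using Sq xy A pq D by auto
      moreover have "p = a"
      proof (cases "w p \<le> i")
        case True then show ?thesis using Sp pq D \<open>q = b\<close> by auto
      next
        case False then have "w p = Suc i" using xy A by simp
        then show ?thesis using A wi by metis
      qed
      ultimately show ?thesis by simp
    qed
  next
    case False
    then have B: "b = Suc i" using C1 by simp
    show ?thesis
    proof (cases "a = i")
      case True then show ?thesis using pq B by auto
    next
      case False
      then have G: "w b = i" using C2 by simp
      have pa: "p = a" using Sp xy G pq B by auto
      have "q = b"
      proof (rule ccontr)
        assume "q \<noteq> b"
        then have "q \<le> i" using pq B by auto
        then have "w q \<le> i" using Sq pa pq by auto
        then have "w q = w b" using xy G by simp
        then show False using wi \<open>q \<noteq> b\<close> by metis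
      qed
      then show ?thesis using pa by simp
    qed
  qed
qed


theorem lemma2p8:
  fixes n i :: nat and w :: "nat \<Rightarrow> nat" and s :: "nat list"
  assumes "w permutes {1..n}"
    and "i \<in> supp n w"
    and "s \<in> R n w"
    and "count_list s i = 1"
    and "unconfined s i"
  shows "\<forall>t\<in>R n w. count_list t i = 1 \<and> unconfined t i"
proof
  fix t assume "t \<in> R n w"
  then have rt: "reduced_word n w t" by (simp add: R_def)
  have rs: "reduced_word n w s" using assms(3) by (simp add: R_def)
  have ts: "tight n s" and tt: "tight n t" using rs rt reduced_tight by blast+
  have ws: "is_word n s" "word_perm s = w" using rs by (auto simp: reduced_word_def)
  have wt: "is_word n t" "word_perm t = w" using rt by (auto simp: reduced_word_def)
  have injw: "inj w" using word_perm_inj[of s] ws by simp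
  have "i \<in> set s" using assms(4) count_list_0_iff[of s i] by auto
  then have i: "i \<in> {1..<n}" using ws by (auto simp: is_word_def)
  obtain ps qs where s: "s = ps @ i # qs" and ips: "i \<notin> set ps"
    using split_list_first[OF \<open>i \<in> set s\<close>] by blast
  have "count_list qs i = 0" using assms(4) s ips by simp
  then have iqs: "i \<notin> set qs" by (simp add: count_list_0_iff)
  have wps: "is_word n ps" "is_word n qs" using ws s by auto
  have fq: "word_perm qs permutes {1..n}" using wps word_perm_permutes by blast
  obtain a where a: "word_perm qs a = i" using exists_pre[OF fq, of i] i by auto
  obtain b where b: "word_perm qs b = Suc i" using exists_pre[OF fq, of "Suc i"] i by auto
  note st = struct[OF wps(1) wps(2) ips iqs i a b]
  have ab: "a \<le> i" "i < b" "1 \<le> a" "b \<le> n" using st(1-4) .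
  have S: "\<forall>x. w x \<le> i \<longleftrightarrow> (x \<le> i \<and> x \<noteq> a) \<or> x = b" using st(5) s ws by simp
  have wa: "w a = word_perm ps (Suc i)" using st(6) s ws by simp
  have wb: "w b = word_perm ps i" using st(7) s ws by simp
  let ?w' = "word_perm (rev s)"
  have rs_eq: "rev s = rev qs @ i # rev ps" using s by simp
  have fp': "word_perm (rev ps) permutes {1..n}" using wps word_perm_permutes by auto
  obtain a' where a': "word_perm (rev ps) a' = i" using exists_pre[OF fp', of i] i by auto
  obtain b' where b': "word_perm (rev ps) b' = Suc i" using exists_pre[OF fp', of "Suc i"] i by auto
  have rw: "is_word n (rev qs)" "is_word n (rev ps)" "i \<notin> set (rev qs)" "i \<notin> set (rev ps)"
    using wps ips iqs by auto
  note st'' = struct[OF rw i a' b']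
  have S': "\<forall>x. ?w' x \<le> i \<longleftrightarrow> (x \<le> i \<and> x \<noteq> a') \<or> x = b'" using st''(5) rs_eq by simp
  have psinv: "word_perm ps (word_perm (rev ps) x) = x" for x
    using word_perm_rev_inv[of ps] by (metis comp_apply id_apply)
  have a'eq: "a' = w b" using psinv[of a'] a' wb by simp
  have b'eq: "b' = w a" using psinv[of b'] b' wa by simp
  have uc: "\<not> between s i (Suc i)" "\<not> (i \<ge> 2 \<and> between s i (i - 1))"
    using assms(5) by (auto simp: unconfined_def)
  have C1: "w a = Suc i \<or> b = Suc i"
  proof -
    have "Suc i \<notin> set ps \<or> Suc i \<notin> set qs" using uc(1) between_split[OF ips iqs] s by simp
    then show ?thesis
    proof
      assume "Suc i \<notin> set ps"
      then have "word_perm ps (Suc i) = Suc i" using ips by (intro word_perm_fix) auto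
      then show ?thesis using wa by simp
    next
      assume "Suc i \<notin> set qs"
      then have "word_perm qs (Suc i) = Suc i" using iqs by (intro word_perm_fix) auto
      then show ?thesis using b word_perm_inj[of qs] by (metis injD)
    qed
  qed
  have C2: "w b = i \<or> a = i"
  proof (cases "i \<ge> 2")
    case False then show ?thesis using ab by auto
  next
    case True
    have "i - 1 \<notin> set ps \<or> i - 1 \<notin> set qs" using uc(2) True between_split[OF ips iqs] s by simp
    then show ?thesis
    proof
      assume "i - 1 \<notin> set ps"
      then have "word_perm ps i = i" using ips True by (intro word_perm_fix) auto
      then show ?thesis using wb by simp
    next
      assume "i - 1 \<notin> set qs"
      then have "word_perm qs i = i" using iqs True by (intro word_perm_fix) auto
      then show ?thesis using a word_perm_inj[of qs] by (metis injD)
    qed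
  qed
  have wrt: "word_perm (rev t) = ?w'" using word_perm_rev_eq[of t s] wt ws by simp
  have K: "word_perm v a = i \<and> word_perm v b = Suc i" if tuv: "t = u @ i # v" for u v
  proof -
    have wuv: "is_word n u" "is_word n v" using wt tuv by auto
    have fv: "word_perm v permutes {1..n}" using wuv word_perm_permutes by blast
    obtain p where p: "word_perm v p = i" using exists_pre[OF fv, of i] i by auto
    obtain q where q: "word_perm v q = Suc i" using exists_pre[OF fv, of "Suc i"] i by auto
    have r1: "a \<le> p \<and> p < q \<and> q \<le> b"
      using range_occ[OF tt _ ab(3) ab(1) ab(2) tuv p q] S wt by simp
    have fu': "word_perm (rev u) permutes {1..n}" using wuv word_perm_permutes by auto
    obtain x where x: "word_perm (rev u) x = i" using exists_pre[OF fu', of i] i by auto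
    obtain y where y: "word_perm (rev u) y = Suc i" using exists_pre[OF fu', of "Suc i"] i by auto
    have trt: "tight n (rev t)" using tight_rev[OF tt] .
    have rt_eq: "rev t = rev v @ i # rev u" using tuv by simp
    have r2: "a' \<le> x \<and> x < y \<and> y \<le> b'"
      using range_occ[OF trt _ st''(3) st''(1) st''(2) rt_eq x y] S' wrt by simp
    have uinv: "word_perm u (word_perm (rev u) z) = z" for z
      using word_perm_rev_inv[of u] by (metis comp_apply id_apply)
    have xe: "x = word_perm u i" using uinv[of x] x by simp
    have ye: "y = word_perm u (Suc i)" using uinv[of y] y by simp
    have wuv_eq: "w = word_perm u \<circ> (sigma i \<circ> word_perm v)"
      using wt tuv by (simp add: word_perm_append)
    have wz: "w z = word_perm u (sigma i (word_perm v z))" for z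
      using wuv_eq by simp
    have wp: "w p = y" using wz[of p] p ye by (simp add: sigma_apply)
    have wq: "w q = x" using wz[of q] q xe by (simp add: sigma_apply)
    have S1: "\<forall>z\<ge>1. w z \<le> i \<longleftrightarrow> (z \<le> i \<and> z \<noteq> a) \<or> z = b" using S by simp
    have xy: "w b \<le> w q" "w q < w p" "w p \<le> w a" using r2 wp wq a'eq b'eq by auto
    have pq: "a \<le> p" "p < q" "q \<le> b" using r1 by auto
    have "p = a \<and> q = b"
      by (rule casework[OF injw S1 ab(3) ab(1) ab(2) C1 C2 pq xy])
    then show ?thesis using p q by simp
  qed
  have it: "i \<in> set t"
  proof (rule ccontr)
    assume "i \<notin> set t"
    then have "w b \<le> i \<longleftrightarrow> b \<le> i" using word_perm_preserve[of i t b] wt by simp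
    then show False using S ab by auto
  qed
  have c1: "count_list t i = 1"
  proof (rule ccontr)
    assume "count_list t i \<noteq> 1"
    moreover have "count_list t i \<noteq> 0" using it count_list_0_iff by metis
    ultimately have "count_list t i \<ge> 2" by simp
    obtain ys zs where t1: "t = ys @ i # zs" and "i \<notin> set zs"
      using split_list_last[OF it] by blast
    then have "count_list ys i \<ge> 1" using \<open>count_list t i \<ge> 2\<close> by simp
    then have "i \<in> set ys" using count_list_0_iff by (metis not_one_le_zero)
    then obtain ys1 zs1 where t2: "ys = ys1 @ i # zs1" and izs1: "i \<notin> set zs1"
      using split_list_last[of i ys] by blast
    have k1: "word_perm (zs1 @ i # zs) a = i" using K[of ys1 "zs1 @ i # zs"] t1 t2 by simp
    have k2: "word_perm zs a = i" using K[of "ys1 @ i # zs1" zs] t1 t2 by simp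
    have "word_perm (zs1 @ i # zs) a = word_perm zs1 (Suc i)"
      using k2 by (simp add: word_perm_append sigma_apply)
    then have "word_perm zs1 (Suc i) = i" using k1 by simp
    then show False using word_perm_preserve[OF izs1, of "Suc i"] by simp
  qed
  obtain p q where t: "t = p @ i # q" and ip: "i \<notin> set p"
    using split_list_first[OF it] by blast
  have "count_list q i = 0" using c1 t ip by simp
  then have iq: "i \<notin> set q" by (simp add: count_list_0_iff)
  have wpq: "is_word n p" "is_word n q" using wt t by auto
  have Kq: "word_perm q a = i" "word_perm q b = Suc i" using K[OF t] by auto
  note stt = struct[OF wpq(1) wpq(2) ip iq i Kq]
  have wa2: "w a = word_perm p (Suc i)" using stt(6) t wt by simp
  have wb2: "w b = word_perm p i" using stt(7) t wt by simp
  have tp: "tight n p" using tight_prefix[of n p "i # q"] tt t by simp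
  have tq: "tight n q" using tight_suffix[of n p "i # q"] tt t tight_Cons(1) by blast
  have nb1: "\<not> between t i (Suc i)"
  proof -
    have "\<not> (Suc i \<in> set p \<and> Suc i \<in> set q)"
      using C1
    proof
      assume "w a = Suc i"
      then have "word_perm p (Suc i) = Suc i" using wa2 by simp
      then have "Suc i \<notin> set p" using no_occ[OF tp] pres_up[OF ip] by blast
      then show ?thesis by simp
    next
      assume "b = Suc i"
      then have "word_perm q (Suc i) = Suc i" using Kq by simp
      then have "Suc i \<notin> set q" using no_occ[OF tq] pres_up[OF iq] by blast
      then show ?thesis by simp
    qed
    then show ?thesis using between_split[OF ip iq] t by simp
  qed
  have nb2: "\<not> (i \<ge> 2 \<and> between t i (i - 1))"
  proof
    assume h: "i \<ge> 2 \<and> between t i (i - 1)"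
    have "\<not> (i - 1 \<in> set p \<and> i - 1 \<in> set q)"
      using C2
    proof
      assume "w b = i"
      then have "word_perm p i = i" using wb2 by simp
      then have "i - 1 \<notin> set p" using no_occ[OF tp] pres_down[OF ip] h by auto
      then show ?thesis by simp
    next
      assume "a = i"
      then have "word_perm q i = i" using Kq by simp
      then have "i - 1 \<notin> set q" using no_occ[OF tq] pres_down[OF iq] h by auto
      then show ?thesis by simp
    qed
    then show False using between_split[OF ip iq] t h by simp
  qed
  show "count_list t i = 1 \<and> unconfined t i"
    using c1 nb1 nb2 by (simp add: unconfined_def)
qed

end
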